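(* If $0<|a|<1$ then $a\in\mathcal{E}$. If $1<|a|\le2$ then $a\in\mathcal{B}$. The set $\mathcal{B}$ is bounded.
   Context: $B_a(z)=z^3\frac{z-a}{1-\bar a z}$, with superattracting fixed points $0,\infty$ and basins $A(0),A(\infty)$. For $a\neq0$, $|a|\neq1$, the free critical points are $c_\pm=\frac{a}{3|a|^2}\left(2+|a|^2\pm\sqrt{(|a|^2-4)(|a|^2-1)}\right)$ (square root of a negative $x$ meaning $i\sqrt{-x}$). A parameter $a$ ($|a|\neq1$) is escaping if $c_+\in A(0)\cup A(\infty)$; $\mathcal{E}$ is the set of escaping parameters and $\mathcal{B}$ is the set of non-escaping parameters ($|a|\neq 1$, $c_+\notin A(0)\cup A(\infty)$). *)

theory Defs
  imports "HOL-Analysis.Analysis"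
begin

text \<open>The Riemann sphere is modelled as complex option: None is the point at infinity.\<close>

definition Bl :: "complex \<Rightarrow> complex \<Rightarrow> complex" where
  "Bl a z = z ^ 3 * ((z - a) / (1 - cnj a * z))"

definition Bsph :: "complex \<Rightarrow> complex option \<Rightarrow> complex option" where
  "Bsph a w = (case w of None \<Rightarrow> None
                | Some z \<Rightarrow> (if 1 - cnj a * z = 0 then None else Some (Bl a z)))"

definition basin0 :: "complex \<Rightarrow> complex option set" where
  "basin0 a = {w. \<exists>N. (\<forall>n\<ge>N. (Bsph a ^^ n) w \<noteq> None) \<and>
                     (\<lambda>n. the ((Bsph a ^^ n) w)) \<longlonglongrightarrow> 0}"

definition basinInf :: "complex \<Rightarrow> complex option set" where
  "basinInf a = {w. \<forall>R::real. \<exists>N. \<forall>n\<ge>N.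
        (case (Bsph a ^^ n) w of None \<Rightarrow> True | Some z \<Rightarrow> R < norm z)}"

definition sqrtc :: "real \<Rightarrow> complex" where
  "sqrtc x = (if 0 \<le> x then complex_of_real (sqrt x) else \<i> * complex_of_real (sqrt (- x)))"

definition cplus :: "complex \<Rightarrow> complex" where
  "cplus a = a / (3 * complex_of_real ((norm a)\<^sup>2)) *
     (2 + complex_of_real ((norm a)\<^sup>2) + sqrtc (((norm a)\<^sup>2 - 4) * ((norm a)\<^sup>2 - 1)))"

definition escaping :: "complex set" where
  "escaping = {a. norm a \<noteq> 1 \<and> Some (cplus a) \<in> basin0 a \<union> basinInf a}"

definition nonescaping :: "complex set" where
  "nonescaping = {a. norm a \<noteq> 1 \<and> Some (cplus a) \<notin> basin0 a \<union> basinInf a}"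

end

theory Submission
  imports Defs
begin

lemma inv_grow:
  fixes a z0 :: complex and M c :: real
  assumes M: "M > 0" and c: "c > 1" and z0: "norm z0 \<ge> M"
    and step: "\<And>z. norm z \<ge> M \<Longrightarrow> 1 - cnj a * z \<noteq> 0 \<Longrightarrow> norm (Bl a z) \<ge> c * norm z"
  shows "(Bsph a ^^ n) (Some z0) = None \<or> (\<exists>z. (Bsph a ^^ n) (Some z0) = Some z \<and> norm z \<ge> c^n * M)"
proof (induction n)
  case 0 then show ?case using z0 by simp
next
  case (Suc n)
  then show ?case
  proof
    assume "(Bsph a ^^ n) (Some z0) = None"
    moreover have "Bsph a None = None" by (simp add: Bsph_def)
    ultimately show ?thesis by simp
  next
    assume "\<exists>z. (Bsph a ^^ n) (Some z0) = Some z \<and> norm z \<ge> c^n * M"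
    then obtain z where z: "(Bsph a ^^ n) (Some z0) = Some z" "norm z \<ge> c^n * M" by blast
    have cn: "c^n \<ge> 1" using c by simp
    have "M \<le> c^n * M" using cn M by simp
    then have "norm z \<ge> M" using z(2) by linarith
    show ?thesis
    proof (cases "1 - cnj a * z = 0")
      case True
      have "Bsph a (Some z) = None" using True by (simp add: Bsph_def)
      then show ?thesis using z by simp
    next
      case False
      have "norm (Bl a z) \<ge> c * norm z" using step[OF \<open>norm z \<ge> M\<close> False] .
      moreover have "c * norm z \<ge> c * (c^n * M)" using z(2) c by simp
      moreover have "Bsph a (Some z) = Some (Bl a z)" using False by (simp add: Bsph_def)
      ultimately show ?thesis using z by auto
    qed
  qed
qed

lemma basinInf_grow:
  fixes a z0 :: complex and M c :: real
  assumes M: "M > 0" and c: "c > 1" and z0: "norm z0 \<ge> M"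
    and step: "\<And>z. norm z \<ge> M \<Longrightarrow> 1 - cnj a * z \<noteq> 0 \<Longrightarrow> norm (Bl a z) \<ge> c * norm z"
  shows "Some z0 \<in> basinInf a"
  unfolding basinInf_def
proof (safe)
  fix R :: real
  obtain N where N: "R / M < c ^ N" using real_arch_pow[OF c] by blast
  show "\<exists>N. \<forall>n\<ge>N. case (Bsph a ^^ n) (Some z0) of None \<Rightarrow> True | Some z \<Rightarrow> R < cmod z"
  proof (intro exI allI impI)
    fix n assume "N \<le> n"
    then have "c^N \<le> c^n" using c by (simp add: power_increasing)
    then have "R / M < c^n" using N by linarith
    then have "R < c^n * M" using M by (simp add: pos_divide_less_eq)
    then show "case (Bsph a ^^ n) (Some z0) of None \<Rightarrow> True | Some z \<Rightarrow> R < cmod z"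
      using inv_grow[OF M c z0 step, of n] by auto
  qed
qed

lemma basinInf_back:
  assumes "Bsph a w \<in> basinInf a" shows "w \<in> basinInf a"
  unfolding basinInf_def
proof safe
  fix R :: real
  obtain N where N: "\<forall>n\<ge>N. case (Bsph a ^^ n) (Bsph a w) of None \<Rightarrow> True | Some z \<Rightarrow> R < cmod z"
    using assms unfolding basinInf_def by blast
  show "\<exists>N. \<forall>n\<ge>N. case (Bsph a ^^ n) w of None \<Rightarrow> True | Some z \<Rightarrow> R < cmod z"
  proof (intro exI allI impI)
    fix n assume "Suc N \<le> n"
    then obtain m where m: "n = Suc m" "m \<ge> N" by (cases n) auto
    show "case (Bsph a ^^ n) w of None \<Rightarrow> True | Some z \<Rightarrow> R < cmod z"
      using N m by (simp add: funpow_Suc_right del: funpow.simps)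
  qed
qed

lemma norm_diff_ident:
  fixes a z :: complex
  shows "(norm (z - a))^2 - (norm (1 - cnj a * z))^2 = ((norm z)^2 - 1) * (1 - (norm a)^2)"
  unfolding cmod_power2 by (cases z; cases a) (simp add: power2_eq_square algebra_simps)

lemma circle_step:
  fixes a z :: complex
  assumes "norm z = 1" "norm a \<noteq> 1"
  shows "1 - cnj a * z \<noteq> 0" "norm (Bl a z) = 1"
proof -
  show nz: "1 - cnj a * z \<noteq> 0"
  proof
    assume "1 - cnj a * z = 0"
    then have "cnj a * z = 1" by simp
    then have "norm (cnj a * z) = 1" by simp
    then show False using assms by (simp add: norm_mult)
  qed
  have "(norm (z - a))^2 = (norm (1 - cnj a * z))^2"
    using norm_diff_ident[of z a] assms(1) by simp
  then have "norm (z - a) = norm (1 - cnj a * z)"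
    using power2_eq_imp_eq norm_ge_zero by blast
  then show "norm (Bl a z) = 1"
    using nz assms(1) by (simp add: Bl_def norm_mult norm_divide norm_power)
qed

lemma outside_step:
  fixes a z :: complex
  assumes "norm a < 1" "norm z \<ge> 1" "1 - cnj a * z \<noteq> 0"
  shows "norm (Bl a z) \<ge> norm z ^ 3"
proof -
  have "(norm (z - a))^2 - (norm (1 - cnj a * z))^2 \<ge> 0"
  proof -
    have "1 \<le> (norm z)^2" using assms(2) by (simp add: one_le_power)
    moreover have "(norm a)^2 \<le> 1" using assms(1) by (simp add: power_le_one)
    ultimately show ?thesis unfolding norm_diff_ident by (intro mult_nonneg_nonneg) auto
  qed
  then have "(norm (1 - cnj a * z))^2 \<le> (norm (z - a))^2" by simp
  then have le: "norm (1 - cnj a * z) \<le> norm (z - a)"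
    using power2_le_imp_le norm_ge_zero by blast
  have pos: "norm (1 - cnj a * z) > 0" using assms(3) by simp
  have "1 \<le> norm (z - a) / norm (1 - cnj a * z)" using le pos by simp
  then have "norm z ^ 3 * 1 \<le> norm z ^ 3 * (norm (z - a) / norm (1 - cnj a * z))"
    by (intro mult_left_mono) auto
  then show ?thesis by (simp add: Bl_def norm_mult norm_divide norm_power)
qed

lemma far_step:
  fixes a z :: complex
  assumes "norm a \<ge> 2" "norm z \<ge> 2 * norm a" "1 - cnj a * z \<noteq> 0"
  shows "norm (Bl a z) \<ge> 2 * norm z"
proof -
  define s where "s = norm a"
  define t where "t = norm z"
  have s2: "s \<ge> 2" and ts: "t \<ge> 2 * s" using assms by (auto simp: s_def t_def)
  have num: "norm (z - a) \<ge> t / 2"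
    using norm_triangle_ineq2[of z a] s2 ts unfolding s_def t_def by linarith
  have "norm (1 - cnj a * z) \<le> 1 + s * t"
    using norm_triangle_ineq4[of 1 "cnj a * z"] by (simp add: norm_mult s_def t_def)
  also have "\<dots> \<le> 2 * s * t"
  proof -
    have "1 * 1 \<le> s * t" using s2 ts by (intro mult_mono) auto
    then show ?thesis by simp
  qed
  finally have den: "norm (1 - cnj a * z) \<le> 2 * s * t" .
  have pos: "norm (1 - cnj a * z) > 0" using assms(3) by simp
  have tpos: "t > 0" using s2 ts by linarith
  have "norm (z - a) / norm (1 - cnj a * z) \<ge> (t/2) / (2 * s * t)"
    using num den pos tpos s2 by (intro frac_le) auto
  also have "(t/2) / (2 * s * t) = 1 / (4 * s)" using tpos by (simp add: field_simps)
  finally have q: "norm (z - a) / norm (1 - cnj a * z) \<ge> 1 / (4 * s)" .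
  have "t^3 * (1 / (4 * s)) \<ge> 2 * t"
  proof -
    have "t * t \<ge> (2 * s) * (2 * s)" using ts s2 by (intro mult_mono) auto
    also have "(2 * s)*(2 * s) \<ge> 8 * s"
    proof -
      have "2 * s \<le> s * s" using s2 by (intro mult_right_mono) auto
      then show ?thesis by simp
    qed
    finally have "t * t \<ge> 8 * s" .
    then have "(8 * s) * t \<le> (t * t) * t" using tpos by (intro mult_right_mono) auto
    then have "t^3 \<ge> 8 * s * t" by (simp add: power3_eq_cube)
    then show ?thesis using s2 by (simp add: field_simps)
  qed
  also have "t^3 * (1 / (4 * s)) \<le> t^3 * (norm (z - a) / norm (1 - cnj a * z))"
    using q tpos by (intro mult_left_mono) auto
  finally show ?thesis by (simp add: Bl_def norm_mult norm_divide norm_power t_def)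
qed

lemma circle_orbit:
  fixes a z0 :: complex
  assumes "norm z0 = 1" "norm a \<noteq> 1"
  shows "\<exists>z. (Bsph a ^^ n) (Some z0) = Some z \<and> norm z = 1"
proof (induction n)
  case 0 then show ?case using assms by simp
next
  case (Suc n)
  then obtain z where z: "(Bsph a ^^ n) (Some z0) = Some z" "norm z = 1" by blast
  have "Bsph a (Some z) = Some (Bl a z)"
    using circle_step(1)[OF z(2) assms(2)] by (simp add: Bsph_def)
  then show ?case using z circle_step(2)[OF z(2) assms(2)] by simp
qed

lemma circle_not_basin:
  fixes a z0 :: complex
  assumes "norm z0 = 1" "norm a \<noteq> 1"
  shows "Some z0 \<notin> basin0 a \<union> basinInf a"
proof
  have orb: "\<And>n. norm (the ((Bsph a ^^ n) (Some z0))) = 1"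
    using circle_orbit[OF assms] by (metis option.sel)
  assume "Some z0 \<in> basin0 a \<union> basinInf a"
  then show False
  proof
    assume "Some z0 \<in> basin0 a"
    then have "(\<lambda>n. the ((Bsph a ^^ n) (Some z0))) \<longlonglongrightarrow> 0" unfolding basin0_def by blast
    then have "(\<lambda>n. norm (the ((Bsph a ^^ n) (Some z0)))) \<longlonglongrightarrow> 0"
      using tendsto_norm_zero by blast
    then have "(\<lambda>n. 1::real) \<longlonglongrightarrow> 0" using orb by simp
    then show False by (simp add: LIMSEQ_const_iff)
  next
    assume "Some z0 \<in> basinInf a"
    then obtain N where N: "\<forall>n\<ge>N. case (Bsph a ^^ n) (Some z0) of None \<Rightarrow> True | Some z \<Rightarrow> 1 < norm z"
      unfolding basinInf_def by blast
    obtain z where z: "(Bsph a ^^ N) (Some z0) = Some z" "norm z = 1"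
      using circle_orbit[OF assms] by blast
    show False using N[rule_format, of N] z by simp
  qed
qed

lemma cplus_real:
  fixes a :: complex
  assumes "((norm a)^2 - 4) * ((norm a)^2 - 1) \<ge> 0"
  shows "cplus a = a * complex_of_real ((2 + (norm a)^2 + sqrt (((norm a)^2 - 4) * ((norm a)^2 - 1))) / (3 * (norm a)^2))"
proof -
  define r where "r = (norm a)^2"
  define q where "q = sqrt (((norm a)^2 - 4) * ((norm a)^2 - 1))"
  have sq: "sqrtc (((norm a)^2 - 4) * ((norm a)^2 - 1)) = complex_of_real q"
    using assms unfolding sqrtc_def q_def by simp
  have e: "complex_of_real ((2 + r + q) / (3 * r)) = (2 + complex_of_real r + complex_of_real q) / (3 * complex_of_real r)"
    by simp
  have "cplus a = a / (3 * complex_of_real r) * (2 + complex_of_real r + complex_of_real q)"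
    unfolding cplus_def sq r_def by simp
  also have "\<dots> = a * complex_of_real ((2 + r + q) / (3 * r))" unfolding e by simp
  finally show ?thesis unfolding r_def q_def .
qed

lemma part1:
  fixes a :: complex
  assumes "0 < norm a" "norm a < 1"
  shows "norm (cplus a) > 1"
proof -
  define s where "s = norm a"
  define r where "r = s^2"
  define X where "X = (r - 4) * (r - 1)"
  define q where "q = sqrt X"
  have s: "0 < s" "s < 1" using assms by (auto simp: s_def)
  have r: "0 < r" "r < 1" using s unfolding r_def by (auto simp: power_less_one_iff)
  have X: "X > 0" unfolding X_def using r by (intro mult_neg_neg) auto
  have q: "q > 0" "q^2 = X" using X by (auto simp: q_def)
  have "(2 + r + q)^2 = (2 + r)^2 + 2 * (2 + r) * q + X" using q by (simp add: power2_eq_square algebra_simps)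
  moreover have "2 * (2 + r) * q > 0" using q r by simp
  moreover have "(2 + r)^2 + X - 9 * r = 2 * ((r - 1) * (r - 4))"
    unfolding X_def by (simp add: power2_eq_square algebra_simps)
  moreover have "(r - 1) * (r - 4) > 0" using r by (intro mult_neg_neg) auto
  ultimately have "9 * r < (2 + r + q)^2" by linarith
  moreover have "(3 * s)^2 = 9 * r" unfolding r_def by (simp add: power_mult_distrib)
  ultimately have "(3 * s)^2 < (2 + r + q)^2" by simp
  moreover have "0 \<le> 2 + r + q" using q r by linarith
  ultimately have lt: "3 * s < 2 + r + q" by (rule power2_less_imp_less)
  have "cplus a = a * complex_of_real ((2 + r + q) / (3 * r))"
    using cplus_real[of a] X unfolding q_def X_def r_def s_def by simp
  have kpos: "(2 + r + q) / (3 * r) \<ge> 0" using q r by simp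
  have "norm (cplus a) = norm a * norm (complex_of_real ((2 + r + q) / (3 * r)))"
    unfolding \<open>cplus a = _\<close> by (simp only: norm_mult)
  also have "\<dots> = s * ((2 + r + q) / (3 * r))"
    by (simp only: norm_of_real abs_of_nonneg[OF kpos] s_def)
  also have "\<dots> = (2 + r + q) / (3 * s)" using s unfolding r_def by (simp add: power2_eq_square field_simps)
  also have "\<dots> > 1" using lt s by simp
  finally show ?thesis .
qed

lemma part2:
  fixes a :: complex
  assumes "1 < norm a" "norm a \<le> 2"
  shows "norm (cplus a) = 1"
proof -
  define s where "s = norm a"
  define r where "r = s^2"
  define X where "X = (r - 4) * (r - 1)"
  define y where "y = sqrt (- X)"
  have s: "1 < s" "s \<le> 2" using assms by (auto simp: s_def)
  have r1: "1 < r" using s unfolding r_def by simp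
  have "s^2 \<le> 2^2" using s by (intro power_mono) auto
  then have r: "1 < r" "r \<le> 4" using r1 unfolding r_def by auto
  have X: "X \<le> 0" unfolding X_def using r by (intro mult_nonpos_nonneg) auto
  have y: "y^2 = - X" "y \<ge> 0" using X by (auto simp: y_def)
  have sq: "sqrtc X = \<i> * complex_of_real y"
    using X unfolding sqrtc_def y_def by auto
  have "cplus a = a / (3 * complex_of_real r) * Complex (2 + r) y"
  proof -
    have e: "2 + complex_of_real r + \<i> * complex_of_real y = Complex (2 + r) y"
      by (simp add: complex_eq_iff)
    have "cplus a = a / (3 * complex_of_real r) * (2 + complex_of_real r + sqrtc X)"
      unfolding cplus_def X_def r_def s_def by simp
    then show ?thesis unfolding sq e .
  qed
  then have "norm (cplus a) = s / (3 * r) * sqrt ((2 + r)^2 + y^2)"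
    using r by (simp add: norm_mult norm_divide complex_norm s_def)
  also have "(2 + r)^2 + y^2 = (3 * s)^2"
    using y unfolding X_def r_def by (simp add: power2_eq_square algebra_simps)
  also have "sqrt ((3 * s)^2) = 3 * s" using s by (subst real_sqrt_abs) simp
  also have "s / (3 * r) * (3 * s) = 1" using s unfolding r_def by (simp add: power2_eq_square)
  finally show ?thesis .
qed

lemma part3:
  fixes a :: complex
  assumes "64 \<le> norm a"
  shows "Some (cplus a) \<in> basinInf a"
proof -
  define s where "s = norm a"
  define r where "r = s^2"
  define X where "X = (r - 4) * (r - 1)"
  define q where "q = sqrt X"
  define k where "k = (2 + r + q) / (3 * r)"
  define cp where "cp = cplus a"
  have s: "64 \<le> s" using assms by (simp add: s_def)
  have "(64::real)^2 \<le> s^2" using s by (intro power_mono) auto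
  then have r: "4096 \<le> r" unfolding r_def by simp
  have rs: "r = s * s" unfolding r_def by (simp add: power2_eq_square)
  have X: "X \<ge> 0" unfolding X_def using r by (intro mult_nonneg_nonneg) auto
  have "X \<le> r^2" unfolding X_def using r by (simp add: power2_eq_square algebra_simps)
  then have "q \<le> sqrt (r^2)" unfolding q_def by (rule real_sqrt_le_mono)
  then have qr: "q \<le> r" using r by (simp add: real_sqrt_abs)
  have "(r - 4)^2 \<le> X" unfolding X_def using r by (simp add: power2_eq_square algebra_simps)
  then have "sqrt ((r - 4)^2) \<le> q" unfolding q_def by (rule real_sqrt_le_mono)
  then have qr2: "r - 4 \<le> q" using r by (simp add: real_sqrt_abs)
  have rpos: "r > 0" using r by simp
  have k1: "3/5 \<le> k" unfolding k_def using rpos qr2 r by (simp add: le_divide_eq)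
  have k2: "k \<le> 7/10" unfolding k_def using rpos qr r by (simp add: divide_le_eq)
  have cpe: "cp = a * complex_of_real k"
    unfolding cp_def k_def q_def X_def r_def s_def using X cplus_real[of a]
    unfolding X_def r_def s_def by simp
  have spos: "s > 0" using s by simp
  have A: "norm cp \<ge> 3/5 * s"
  proof -
    have "norm cp = s * k" unfolding cpe using k1 by (simp add: norm_mult s_def)
    then show ?thesis using k1 spos by (simp add: mult_left_mono mult.commute)
  qed
  have "cp - a = a * complex_of_real (k - 1)" unfolding cpe by (simp add: algebra_simps)
  then have "norm (cp - a) = s * \<bar>k - 1\<bar>" by (simp only: norm_mult norm_of_real s_def)
  moreover have "\<bar>k - 1\<bar> = 1 - k" using k2 by simp
  ultimately have "norm (cp - a) = s * (1 - k)" by simp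
  then have B: "norm (cp - a) \<ge> 3/10 * s" using k2 spos by (simp add: mult_left_mono mult.commute)
  have "cnj a * a = complex_of_real r" unfolding r_def s_def
    by (subst complex_norm_square) (rule mult.commute)
  then have "1 - cnj a * cp = complex_of_real (1 - r * k)" unfolding cpe
    by (simp add: mult.assoc[symmetric])
  moreover have "r * k \<ge> r * (3/5)" using k1 rpos by (intro mult_left_mono) auto
  moreover have "r * k \<le> r * (7/10)" using k2 rpos by (intro mult_left_mono) auto
  ultimately have de: "1 - cnj a * cp = complex_of_real (1 - r * k)"
    and rk: "r * (3/5) \<le> r * k" "r * k \<le> r * (7/10)" by auto
  have "norm (1 - cnj a * cp) = \<bar>1 - r * k\<bar>" unfolding de by (simp only: norm_of_real)
  moreover have rk1: "1 < r * k" using rk(1) r by linarith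
  then have "\<bar>1 - r * k\<bar> = r * k - 1" by simp
  ultimately have nd: "norm (1 - cnj a * cp) = r * k - 1" by simp
  have D1: "norm (1 - cnj a * cp) \<le> r" using nd rk(2) r by linarith
  have "norm (1 - cnj a * cp) > 0" using nd rk1 by linarith
  then have D: "norm (1 - cnj a * cp) \<le> r" "1 - cnj a * cp \<noteq> 0" using D1 by auto
  have Dpos: "norm (1 - cnj a * cp) > 0" using D by simp
  have "norm (cp - a) / norm (1 - cnj a * cp) \<ge> (3/10 * s) / (s * s)"
    using B D(1) Dpos spos rs by (intro frac_le) auto
  also have "(3/10 * s) / (s * s) = 3 / (10 * s)" using spos by (simp add: field_simps)
  finally have q1: "norm (cp - a) / norm (1 - cnj a * cp) \<ge> 3 / (10 * s)" .
  have q2: "norm cp ^ 3 \<ge> (3/5 * s)^3" using A spos by (intro power_mono) auto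
  have "norm cp ^ 3 * (norm (cp - a) / norm (1 - cnj a * cp)) \<ge> (3/5 * s)^3 * (3 / (10 * s))"
    using q1 q2 spos by (intro mult_mono) auto
  also have "(3/5 * s)^3 * (3 / (10 * s)) = 81/1250 * (s * s)" using spos
    by (simp add: field_simps power3_eq_cube)
  also have "81/1250 * (s * s) \<ge> 2 * (2 * s)"
  proof -
    have "5000 / 81 * s \<le> s * s" using s spos by (intro mult_right_mono) auto
    then show ?thesis by simp
  qed
  finally have big0: "norm (Bl a cp) \<ge> 2 * (2 * norm a)"
    by (simp add: Bl_def norm_mult norm_divide norm_power s_def)
  then have big: "norm (Bl a cp) \<ge> 2 * norm a" using spos s_def by linarith
  have bs: "Bsph a (Some cp) = Some (Bl a cp)" using D(2) by (simp add: Bsph_def)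
  have "Some (Bl a cp) \<in> basinInf a"
  proof (rule basinInf_grow[where M = "2 * norm a" and c = 2])
    show "0 < 2 * norm a" using spos s_def by simp
    show "(1::real) < 2" by simp
    show "2 * norm a \<le> norm (Bl a cp)" using big by simp
    fix z assume "2 * norm a \<le> norm z" "1 - cnj a * z \<noteq> 0"
    then show "2 * norm z \<le> norm (Bl a z)" using far_step[of a z] s s_def by simp
  qed
  then show ?thesis using basinInf_back[of a "Some cp"] bs cp_def by simp
qed

lemma part1_esc:
  fixes a :: complex
  assumes "0 < norm a" "norm a < 1"
  shows "a \<in> escaping"
proof -
  define M where "M = norm (cplus a)"
  have M: "M > 1" using part1[OF assms] M_def by simp
  have "Some (cplus a) \<in> basinInf a"
  proof (rule basinInf_grow[where M = M and c = M])
    show "0 < M" "1 < M" using M by auto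
    show "M \<le> norm (cplus a)" using M_def by simp
    fix z assume z: "M \<le> norm z" "1 - cnj a * z \<noteq> 0"
    have z1: "norm z \<ge> 1" using z M by simp
    have "norm (Bl a z) \<ge> norm z ^ 3" using outside_step[OF assms(2) z1 z(2)] .
    moreover have "norm z * M \<le> norm z * (norm z * norm z)"
    proof (rule mult_left_mono)
      have "norm z * 1 \<le> norm z * norm z" using z1 by (intro mult_left_mono) auto
      then show "M \<le> norm z * norm z" using z by simp
    qed simp
    ultimately show "M * norm z \<le> norm (Bl a z)" by (simp add: power3_eq_cube mult.commute)
  qed
  then show ?thesis unfolding escaping_def using assms by auto
qed

theorem mainTheorem10:
  shows "(\<forall>a::complex. 0 < norm a \<and> norm a < 1 \<longrightarrow> a \<in> escaping)
       \<and> (\<forall>a::complex. 1 < norm a \<and> norm a \<le> 2 \<longrightarrow> a \<in> nonescaping)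
       \<and> bounded nonescaping"
proof (intro conjI allI impI)
  fix a :: complex assume "0 < norm a \<and> norm a < 1"
  then show "a \<in> escaping" using part1_esc by blast
next
  fix a :: complex assume a: "1 < norm a \<and> norm a \<le> 2"
  then have "norm (cplus a) = 1" using part2 by blast
  then show "a \<in> nonescaping" unfolding nonescaping_def using circle_not_basin[of "cplus a" a] a by auto
next
  have "nonescaping \<subseteq> cball 0 64"
  proof
    fix a assume a: "a \<in> nonescaping"
    show "a \<in> cball 0 64"
    proof (rule ccontr)
      assume "a \<notin> cball 0 64"
      then have "64 \<le> norm a" by simp
      then have "Some (cplus a) \<in> basinInf a" by (rule part3)
      then show False using a unfolding nonescaping_def by auto
    qed
  qed
  then show "bounded nonescaping" using bounded_cball bounded_subset by blast
qed

end
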